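(* Let $\mathcal{L}$ be the set of formulas of classical propositional calculus and let $\mathcal{C}: 2^{\mathcal{L}}\to 2^{\mathcal{L}}$ satisfy Weak Compactness, Inclusion, Cumulativity, $\wedge$-R, $\neg$-R1 and $\neg$-R2. Define a binary relation $\mid\!\sim$ on $\mathcal{L}$ by $a \mid\!\sim b$ iff $b \in \mathcal{C}(\{a\})$. Then $\mid\!\sim$ is a cumulative relation.
   Context: Write $\mathcal{C}(A, a_1,\dots,a_k)$ for $\mathcal{C}(A\cup\{a_1,\dots,a_k\})$. Properties, for all $A,B\subseteq\mathcal{L}$, $a,b\in\mathcal{L}$: Inclusion: $A\subseteq\mathcal{C}(A)$. Cumulativity: $A\subseteq B\subseteq\mathcal{C}(A)\Rightarrow \mathcal{C}(A)=\mathcal{C}(B)$. Weak Compactness: if $\mathcal{C}(A)=\mathcal{L}$ then $\mathcal{C}(B)=\mathcal{L}$ for some finite $B\subseteq A$. $\wedge$-R: $\mathcal{C}(A,a\wedge b)=\mathcal{C}(A,a,b)$. $\neg$-R1: $\mathcal{C}(A,a,\neg a)=\mathcal{L}$. $\neg$-R2: if $\mathcal{C}(A,\neg a)=\mathcal{L}$ then $a\in\mathcal{C}(A)$. A cumulative relation (Kraus–Lehmann–Magidor) is a binary relation $\mid\!\sim$ on propositional formulas satisfying, for all formulas $a,a',b,b',c$ ($\models$ denoting classical validity/entailment): Reflexivity $a\mid\!\sim a$; Left Logical Equivalence: if $\models a\leftrightarrow a'$ and $a\mid\!\sim c$ then $a'\mid\!\sim c$; Right Weakening: if $b\models b'$ and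 $a\mid\!\sim b$ then $a\mid\!\sim b'$; Cut: if $a\wedge b\mid\!\sim c$ and $a\mid\!\sim b$ then $a\mid\!\sim c$; Cautious Monotonicity: if $a\mid\!\sim b$ and $a\mid\!\sim c$ then $a\wedge b\mid\!\sim c$. *)

theory Defs
  imports Main
begin

text \<open>Formulas of classical propositional calculus over atoms of type 'a,
  with primitive connectives negation and conjunction (the connectives the
  rules talk about); the other connectives are the usual abbreviations.\<close>

datatype 'a form = Atom 'a | Neg "'a form" | Conj "'a form" "'a form"

definition Disj :: "'a form \<Rightarrow> 'a form \<Rightarrow> 'a form" where
  "Disj a b = Neg (Conj (Neg a) (Neg b))"

definition Imp :: "'a form \<Rightarrow> 'a form \<Rightarrow> 'a form" where
  "Imp a b = Neg (Conj a (Neg b))"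

definition Iff :: "'a form \<Rightarrow> 'a form \<Rightarrow> 'a form" where
  "Iff a b = Conj (Imp a b) (Imp b a)"

primrec eval :: "('a \<Rightarrow> bool) \<Rightarrow> 'a form \<Rightarrow> bool" where
  "eval v (Atom p) = v p"
| "eval v (Neg a) = (\<not> eval v a)"
| "eval v (Conj a b) = (eval v a \<and> eval v b)"

definition valid :: "'a form \<Rightarrow> bool" where
  "valid a \<longleftrightarrow> (\<forall>v. eval v a)"

definition entails :: "'a form \<Rightarrow> 'a form \<Rightarrow> bool" where
  "entails a b \<longleftrightarrow> (\<forall>v. eval v a \<longrightarrow> eval v b)"

definition cumulative_rel :: "('a form \<Rightarrow> 'a form \<Rightarrow> bool) \<Rightarrow> bool" where
  "cumulative_rel R \<longleftrightarrow>
     (\<forall>a. R a a) \<and>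
     (\<forall>a a' c. valid (Iff a a') \<and> R a c \<longrightarrow> R a' c) \<and>
     (\<forall>a b b'. entails b b' \<and> R a b \<longrightarrow> R a b') \<and>
     (\<forall>a b c. R (Conj a b) c \<and> R a b \<longrightarrow> R a c) \<and>
     (\<forall>a b c. R a b \<and> R a c \<longrightarrow> R (Conj a b) c)"

end

theory Submission
  imports Defs
begin

locale cop =
  fixes C :: "'a form set \<Rightarrow> 'a form set"
  assumes inclusion: "\<And>A. A \<subseteq> C A"
    and cumulativity: "\<And>A B. A \<subseteq> B \<Longrightarrow> B \<subseteq> C A \<Longrightarrow> C A = C B"
    and conj_R: "\<And>A a b. C (A \<union> {Conj a b}) = C (A \<union> {a, b})"
    and neg_R1: "\<And>A a. C (A \<union> {a, Neg a}) = UNIV"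
    and neg_R2: "\<And>A a. C (A \<union> {Neg a}) = UNIV \<Longrightarrow> a \<in> C A"
begin

lemma incons_mono: "C A = UNIV \<Longrightarrow> A \<subseteq> B \<Longrightarrow> C B = UNIV"
  using cumulativity[of A B] by auto

lemma addR: "a \<in> C A \<Longrightarrow> C A = C (A \<union> {a})"
  using cumulativity[of A "A \<union> {a}"] inclusion[of A] by auto

lemma incons_of:
  "\<not> (\<exists>v. \<forall>x\<in>set G. eval v x) \<Longrightarrow> C (set G) = UNIV"
proof (induction "sum_list (map size G)" arbitrary: G rule: less_induct)
  case less
  show ?case
  proof (cases "\<exists>x\<in>set G. \<not> (\<exists>p. x = Atom p \<or> x = Neg (Atom p))")
    case False
    define v where "v p = (Atom p \<in> set G)" for p
    obtain x where x: "x \<in> set G" "\<not> eval v x" using less.prems by blast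
    then obtain p where "x = Atom p \<or> x = Neg (Atom p)" using False by blast
    with x have "Atom p \<in> set G" "Neg (Atom p) \<in> set G" by (auto simp: v_def)
    then have "set G = set G \<union> {Atom p, Neg (Atom p)}" by auto
    then show ?thesis using neg_R1[of "set G" "Atom p"] by simp
  next
    case True
    then obtain x where xG: "x \<in> set G" and nl: "\<not> (\<exists>p. x = Atom p \<or> x = Neg (Atom p))" by blast
    define G' where "G' = remove1 x G"
    have sG: "set G = set G' \<union> {x}" using xG unfolding G'_def
      by (induction G) auto
    have sz: "sum_list (map size G) = size x + sum_list (map size G')"
      unfolding G'_def using xG by (rule sum_list_map_remove1)
    show ?thesis
    proof (cases x)
      case (Atom p) then show ?thesis using nl by blast
    next
      case (Conj a b)
      have "C (set (a # b # G')) = UNIV"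
        using less.hyps[of "a # b # G'"] less.prems sz sG Conj by auto
      moreover have "set (a # b # G') = set G' \<union> {a, b}" by auto
      ultimately show ?thesis using conj_R[of "set G'" a b] sG Conj by simp
    next
      case (Neg y)
      show ?thesis
      proof (cases y)
        case (Atom p) then show ?thesis using nl Neg by blast
      next
        case (Neg a)
        have h: "C (set (a # G')) = UNIV"
          using less.hyps[of "a # G'"] less.prems sz sG Neg \<open>x = Neg y\<close> by auto
        let ?A = "set G' \<union> {Neg (Neg a)}"
        have "C (?A \<union> {Neg a}) = UNIV"
          using neg_R1[of "set G'" "Neg a"] by (simp add: insert_commute)
        then have "a \<in> C ?A" by (rule neg_R2)
        then have "C ?A = C (?A \<union> {a})" by (rule addR)
        moreover have "C (?A \<union> {a}) = UNIV"
          by (rule incons_mono[OF h]) auto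
        ultimately show ?thesis using sG Neg \<open>x = Neg y\<close> by simp
      next
        case (Conj a b)
        have h1: "C (set (Neg a # G')) = UNIV"
          using less.hyps[of "Neg a # G'"] less.prems sz sG Conj \<open>x = Neg y\<close> by auto
        have h2: "C (set (Neg b # G')) = UNIV"
          using less.hyps[of "Neg b # G'"] less.prems sz sG Conj \<open>x = Neg y\<close> by auto
        let ?A = "set G' \<union> {Neg (Conj a b)}"
        have "C (?A \<union> {Neg a}) = UNIV" by (rule incons_mono[OF h1]) auto
        then have "a \<in> C ?A" by (rule neg_R2)
        then have e1: "C ?A = C (?A \<union> {a})" by (rule addR)
        have "C ((?A \<union> {a}) \<union> {Neg b}) = UNIV" by (rule incons_mono[OF h2]) auto
        then have "b \<in> C (?A \<union> {a})" by (rule neg_R2)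
        then have e2: "C (?A \<union> {a}) = C ((?A \<union> {a}) \<union> {b})" by (rule addR)
        have "(?A \<union> {a}) \<union> {b} = ?A \<union> {a, b}" by auto
        also have "C (?A \<union> {a, b}) = C (?A \<union> {Conj a b})" using conj_R[of ?A a b] by simp
        also have "C (?A \<union> {Conj a b}) = UNIV"
          using neg_R1[of "set G'" "Conj a b"] by (simp add: insert_commute)
        finally show ?thesis using e1 e2 sG Conj \<open>x = Neg y\<close> by simp
      qed
    qed
  qed
qed

lemma incons_of_set:
  assumes "finite S" "\<not> (\<exists>v. \<forall>x\<in>S. eval v x)" shows "C S = UNIV"
proof -
  obtain G where "set G = S" using assms(1) finite_list by blast
  then show ?thesis using incons_of[of G] assms(2) by simp
qed

end

theorem theorem7:
  fixes C :: "'a form set \<Rightarrow> 'a form set"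
  assumes weak_compactness:
      "\<And>A. C A = UNIV \<Longrightarrow> \<exists>B. finite B \<and> B \<subseteq> A \<and> C B = UNIV"
    and inclusion: "\<And>A. A \<subseteq> C A"
    and cumulativity: "\<And>A B. A \<subseteq> B \<Longrightarrow> B \<subseteq> C A \<Longrightarrow> C A = C B"
    and conj_R: "\<And>A a b. C (A \<union> {Conj a b}) = C (A \<union> {a, b})"
    and neg_R1: "\<And>A a. C (A \<union> {a, Neg a}) = UNIV"
    and neg_R2: "\<And>A a. C (A \<union> {Neg a}) = UNIV \<Longrightarrow> a \<in> C A"
  shows "cumulative_rel (\<lambda>a b. b \<in> C {a})"
proof -
  interpret cop C using assms by unfold_locales auto
  have cj: "C {Conj a b} = C {a, b}" for a b using conj_R[of "{}" a b] by simp
  have ins: "b \<in> C {a} \<Longrightarrow> C {a} = C {a, b}" for a b using addR[of b "{a}"] by (simp add: insert_commute)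
  have r1: "\<forall>a. a \<in> C {a}" using inclusion by auto
  have r2: "\<forall>a a' c. valid (Iff a a') \<and> c \<in> C {a} \<longrightarrow> c \<in> C {a'}"
  proof (intro allI impI, elim conjE)
    fix a a' c assume v: "valid (Iff a a')" and c: "c \<in> C {a}"
    have "C ({a} \<union> {Neg a'}) = UNIV"
      by (rule incons_of_set) (use v in \<open>auto simp: valid_def Iff_def Imp_def\<close>)
    then have "a' \<in> C {a}" by (rule neg_R2)
    then have e1: "C {a} = C {a, a'}" by (rule ins)
    have "C ({a'} \<union> {Neg a}) = UNIV"
      by (rule incons_of_set) (use v in \<open>auto simp: valid_def Iff_def Imp_def\<close>)
    then have "a \<in> C {a'}" by (rule neg_R2)
    then have e2: "C {a'} = C {a', a}" by (rule ins)
    show "c \<in> C {a'}" using c e1 e2 by (simp add: insert_commute)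
  qed
  have r3: "\<forall>a b b'. entails b b' \<and> b \<in> C {a} \<longrightarrow> b' \<in> C {a}"
  proof (intro allI impI, elim conjE)
    fix a b b' assume en: "entails b b'" and b: "b \<in> C {a}"
    have "C ({a, b} \<union> {Neg b'}) = UNIV"
      by (rule incons_of_set) (use en in \<open>auto simp: entails_def\<close>)
    then have "b' \<in> C {a, b}" by (rule neg_R2)
    then show "b' \<in> C {a}" using ins[OF b] by simp
  qed
  have r4: "\<forall>a b c. c \<in> C {Conj a b} \<and> b \<in> C {a} \<longrightarrow> c \<in> C {a}"
    using ins cj by auto
  have r5: "\<forall>a b c. b \<in> C {a} \<and> c \<in> C {a} \<longrightarrow> c \<in> C {Conj a b}"
    using ins cj by auto
  show ?thesis unfolding cumulative_rel_def using r1 r2 r3 r4 r5 by blast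
qed

end
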